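(* For all integers $n\geq 1$ and $k\geq 0$, the map $\varphi$ is an involution on $A_{n,k}$, i.e. $\varphi(\varphi(\pi))=\pi$ for every $\pi\in A_{n,k}$.
   Context: For a permutation $\pi=\pi_1\cdots\pi_n$ of $[n]=\{1,\dots,n\}$, $\mathrm{des}(\pi)$ is the number of $m\in[n-1]$ with $\pi_m>\pi_{m+1}$, and $\mathrm{maxdrop}(\pi)=\max\{m-\pi_m:1\leq m\leq n\}$. $A_{n,k}$ is the set of permutations of $[n]$ with $\mathrm{maxdrop}(\pi)\leq k$. For a permutation $\sigma$ of $[n-1]$ and $1\leq r\leq n$, $\sigma\leftarrow r$ is the permutation of $[n]$ obtained by increasing every entry of $\sigma$ that is $\geq r$ by $1$ and then appending $r$ at the end. The map $\varphi:A_{n,k}\to A_{n,k}$ is defined recursively: $\varphi(1)=1$; for $n\geq 2$ and $\pi\in A_{n,k}$, let $i=\mathrm{des}(\pi)$, $j=\pi_n-n+k$, $i'=\lfloor((n+1)k-(k+1)i-j)/(k+1)\rfloor$, $j'=(n+1)k-(k+1)i-j-(k+1)i'$, let $\pi'$ be the permutation of $[n-1]$ order-isomorphic to $\pi_1\cdots\pi_{n-1}$, and set $\varphi(\pi)=\varphi(\pi')\leftarrow(n-k+j')$. *)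

theory Defs
  imports Main
begin

text \<open>Permutations of [n] are represented as lists pi = [pi_1, ..., pi_n] (entry pi_m is pi ! (m-1)).\<close>

definition is_perm :: "nat \<Rightarrow> nat list \<Rightarrow> bool" where
  "is_perm n p \<longleftrightarrow> length p = n \<and> distinct p \<and> set p = {1..n}"

definition des :: "nat list \<Rightarrow> nat" where
  "des p = card {m \<in> {1..<length p}. p ! (m - 1) > p ! m}"

definition maxdrop :: "nat list \<Rightarrow> int" where
  "maxdrop p = Max {int m - int (p ! (m - 1)) | m. m \<in> {1..length p}}"

definition A :: "nat \<Rightarrow> nat \<Rightarrow> nat list set" where
  "A n k = {p. is_perm n p \<and> maxdrop p \<le> int k}"

definition std :: "nat list \<Rightarrow> nat list" where
  "std xs = map (\<lambda>x. card {y \<in> set xs. y \<le> x}) xs"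

definition ins :: "nat list \<Rightarrow> nat \<Rightarrow> nat list" where
  "ins s r = map (\<lambda>x. if x \<ge> r then x + 1 else x) s @ [r]"

function phi :: "nat \<Rightarrow> nat list \<Rightarrow> nat list" where
  "phi k [] = []"
| "phi k [x] = [x]"
| "phi k (x # y # xs) =
     (let p = x # y # xs; n = int (length p); ki = int k;
          i = int (des p); j = int (last p) - n + ki;
          t = (n + 1) * ki - (ki + 1) * i - j;
          i' = t div (ki + 1); j' = t - (ki + 1) * i'
      in ins (phi k (std (butlast p))) (nat (n - ki + j')))"
  by pat_completeness auto
termination
  by (relation "measure (\<lambda>(k, p). length p)") (auto simp: std_def)

end

theory Submission
  imports Defs
begin

definition tval :: "nat \<Rightarrow> nat list \<Rightarrow> int" where
  "tval k p = (int (length p) + 1) * int k - (int k + 1) * int (des p) - (int (last p) - int (length p) + int k)"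

lemma phi_step:
  assumes "length p \<ge> 2"
  shows "phi k p = ins (phi k (std (butlast p))) (nat (int (length p) - int k + tval k p mod (int k + 1)))"
proof -
  obtain x y xs where p: "p = x # y # xs" using assms
    by (metis One_nat_def Suc_1 Suc_le_length_iff)
  show ?thesis unfolding p tval_def
    by (simp only: phi.simps Let_def minus_mult_div_eq_mod) 
qed

lemma wrap:
  fixes K T e :: int
  assumes "K > 0" "0 \<le> e" "e < K"
  shows "T div K + (if T mod K > (T + e) mod K then 1 else 0) = (T + e) div K"
proof -
  define q where "q = T div K"
  define r where "r = T mod K"
  have T: "T = K*q + r" unfolding q_def r_def by simp
  have r: "0 \<le> r" "r < K" unfolding r_def using assms by auto
  show ?thesis
  proof (cases "r + e < K")
    case True
    have d: "(T+e) div K = q" unfolding T using True r assms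
      by (smt (verit) div_mult_self3 div_pos_pos_trivial add.assoc mult.commute)
    have m: "(T+e) mod K = r + e" unfolding T using True r assms
      by (smt (verit) mod_mult_self3 mod_pos_pos_trivial add.assoc mult.commute)
    show ?thesis using d m assms r unfolding q_def[symmetric] r_def[symmetric] by simp
  next
    case False
    have eq: "T + e = K*(q+1) + (r + e - K)" unfolding T by (simp add: algebra_simps)
    have d: "(T+e) div K = q + 1" unfolding eq using False r assms
      by (smt (verit) div_mult_self3 div_pos_pos_trivial mult.commute)
    have m: "(T+e) mod K = r + e - K" unfolding eq using False r assms
      by (smt (verit) mod_mult_self3 mod_pos_pos_trivial mult.commute)
    show ?thesis using d m assms r unfolding q_def[symmetric] r_def[symmetric] by simp
  qed
qed

lemma std_map_mono:
  assumes "\<forall>x\<in>set xs. \<forall>y\<in>set xs. (f x \<le> f y \<longleftrightarrow> x \<le> y)"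
  shows "std (map f xs) = std xs"
proof -
  have inj: "inj_on f (set xs)" unfolding inj_on_def using assms by (metis order_antisym order_refl)
  { fix x assume x: "x \<in> set xs"
    have "{z \<in> set (map f xs). z \<le> f x} = f ` {y \<in> set xs. y \<le> x}"
      using assms x by auto
    hence "card {z \<in> set (map f xs). z \<le> f x} = card {y \<in> set xs. y \<le> x}"
      using inj by (simp add: card_image inj_on_subset) }
  thus ?thesis unfolding std_def by simp
qed

lemma std_perm: assumes "is_perm m s" shows "std s = s"
proof -
  { fix x assume x: "x \<in> set s"
    hence "{y \<in> set s. y \<le> x} = {1..x}" using assms x unfolding is_perm_def by auto
    hence "card {y \<in> set s. y \<le> x} = x" by simp }
  thus ?thesis unfolding std_def by (simp add: map_idI)
qed

lemma des_snoc:
  assumes "xs \<noteq> []"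
  shows "des (xs @ [y]) = des xs + (if last xs > y then 1 else 0)"
proof -
  let ?S = "{m \<in> {1..<length xs}. xs ! (m - 1) > xs ! m}"
  have eq: "{m \<in> {1..<length (xs@[y])}. (xs@[y]) ! (m - 1) > (xs@[y]) ! m}
      = ?S \<union> (if last xs > y then {length xs} else {})" (is "?L = ?R")
  proof (intro set_eqI iffI)
    fix m assume "m \<in> ?L"
    thus "m \<in> ?R" using assms
      by (cases "m = length xs") (auto simp: nth_append last_conv_nth split: if_splits)
  next
    fix m assume "m \<in> ?R"
    have "Suc 0 \<le> length xs" using assms by (simp add: Suc_leI)
    thus "m \<in> ?L" using assms \<open>m \<in> ?R\<close>
      by (cases "m = length xs") (auto simp: nth_append last_conv_nth split: if_splits)
  qed
  show ?thesis unfolding des_def eq by (auto simp: card_insert_if)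
qed

lemma des_map_mono:
  assumes "\<forall>x\<in>set xs. \<forall>y\<in>set xs. (f x < f y \<longleftrightarrow> x < y)"
  shows "des (map f xs) = des xs"
proof -
  have "{m \<in> {1..<length xs}. map f xs ! (m - 1) > map f xs ! m} = {m \<in> {1..<length xs}. xs ! (m - 1) > xs ! m}"
    using assms by auto
  thus ?thesis unfolding des_def by simp
qed

lemma maxdrop_le:
  assumes "p \<noteq> []"
  shows "maxdrop p \<le> c \<longleftrightarrow> (\<forall>m<length p. int (Suc m) - int (p ! m) \<le> c)"
proof -
  have fin: "finite {int m - int (p ! (m - 1)) | m. m \<in> {1..length p}}" by simp
  have ne: "{int m - int (p ! (m - 1)) | m. m \<in> {1..length p}} \<noteq> {}" using assms
    by (auto intro!: exI[of _ 1] simp: Suc_leI)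
  show ?thesis unfolding maxdrop_def Max_le_iff[OF fin ne]

  proof (intro iffI allI impI ballI)
    fix m assume H: "\<forall>a\<in>{int m - int (p ! (m - 1)) | m. m \<in> {1..length p}}. a \<le> c" and m: "m < length p"
    have "int (Suc m) - int (p ! (Suc m - 1)) \<in> {int m - int (p ! (m - 1)) | m. m \<in> {1..length p}}"
      using m by fastforce
    with H show "int (Suc m) - int (p ! m) \<le> c" by auto
  next
    fix a assume H: "\<forall>m<length p. int (Suc m) - int (p ! m) \<le> c"
      and a: "a \<in> {int m - int (p ! (m - 1)) | m. m \<in> {1..length p}}"
    then obtain m where m: "m \<in> {1..length p}" "a = int m - int (p ! (m - 1))" by auto
    have "m - 1 < length p" "Suc (m - 1) = m" using m by auto
    with H m show "a \<le> c" by metis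
  qed
qed

lemma ins_perm:
  assumes "is_perm (n-1) s" "1 \<le> r" "r \<le> n"
  shows "is_perm n (ins s r)"
proof -
  let ?f = "\<lambda>x. if x \<ge> r then x + 1 else x"
  have inj: "inj_on ?f (set s)" by (auto simp: inj_on_def split: if_splits)
  have "r \<notin> ?f ` set s" by auto
  moreover have "?f ` {1..n-1} \<union> {r} = {1..n}"
  proof (intro set_eqI iffI)
    fix x assume "x \<in> ?f ` {1..n-1} \<union> {r}" thus "x \<in> {1..n}" using assms by auto
  next
    fix x assume x: "x \<in> {1..n}"
    show "x \<in> ?f ` {1..n-1} \<union> {r}"
    proof (cases "x < r")
      case True thus ?thesis using x assms by (auto intro!: image_eqI[of x _ x])
    next
      case False
      show ?thesis
      proof (cases "x = r")
        case False
        with \<open>\<not> x < r\<close> have "x > r" by simp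
        thus ?thesis using x assms by (auto intro!: image_eqI[of x _ "x - 1"])
      qed simp
    qed
  qed
  ultimately show ?thesis using assms inj unfolding is_perm_def ins_def
    by (auto simp: distinct_map)
qed

lemma std_butlast_ins:
  assumes "is_perm m s"
  shows "std (butlast (ins s r)) = s"
proof -
  have "std (butlast (ins s r)) = std (map (\<lambda>x. if x \<ge> r then x + 1 else x) s)"
    unfolding ins_def by simp
  also have "\<dots> = std s" by (rule std_map_mono) auto
  finally show ?thesis using std_perm[OF assms] by simp
qed

lemma des_ins:
  assumes "s \<noteq> []"
  shows "des (ins s r) = des s + (if last s \<ge> r then 1 else 0)"
proof -
  have "des (ins s r) = des (map (\<lambda>x. if x \<ge> r then x + 1 else x) s) + (if last s \<ge> r then 1 else 0)"
    unfolding ins_def using assms by (subst des_snoc) (auto simp: last_map)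
  also have "des (map (\<lambda>x. if x \<ge> r then x + 1 else x) s) = des s"
    by (rule des_map_mono) auto
  finally show ?thesis .
qed

lemma cnt1: "x < b \<Longrightarrow> x \<le> n \<Longrightarrow> {y \<in> {1..n::nat} - {b}. y \<le> x} = {1..x}" by auto
lemma cnt2: "b < x \<Longrightarrow> x \<le> n \<Longrightarrow> {y \<in> {1..n::nat} - {b}. y \<le> x} = {1..x} - {b}" by auto
lemma cnt3: "b < x \<Longrightarrow> 1 \<le> b \<Longrightarrow> card ({1..x::nat} - {b}) = x - 1" by simp
lemma injg: "inj_on (\<lambda>x. if x < b then x else x - 1) ({1..n::nat} - {b})"
  by (auto simp: inj_on_def split: if_splits)
lemma monog: "\<forall>x\<in>{1..n::nat} - {b}. \<forall>y\<in>{1..n} - {b}.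
   ((if x < b then x else x - 1) < (if y < b then y else y - 1)) = (x < y)"
  by auto
lemma insg: "x \<in> {1..n::nat} - {b} \<Longrightarrow> (if (if x < b then x else x - 1) \<ge> b then (if x < b then x else x - 1) + 1 else (if x < b then x else x - 1)) = x"
  by auto
lemma imgg: assumes "1 \<le> b" "b \<le> n" shows "(\<lambda>x. if x < b then x else x - 1) ` ({1..n::nat} - {b}) = {1..n-1}"
proof (intro set_eqI iffI)
  fix x assume "x \<in> (\<lambda>x. if x < b then x else x - 1) ` ({1..n} - {b})" thus "x \<in> {1..n-1}" using assms by auto
next
  fix x assume x: "x \<in> {1..n-1}"
  show "x \<in> (\<lambda>x. if x < b then x else x - 1) ` ({1..n} - {b})"
  proof (cases "x < b")
    case True thus ?thesis using x by (auto intro!: image_eqI[of x _ x])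
  next
    case False thus ?thesis using x assms by (auto intro!: image_eqI[of x _ "x + 1"])
  qed
qed

lemma std_butlast:
  assumes "is_perm n p" "n \<ge> 1"
  shows "std (butlast p) = map (\<lambda>x. if x < last p then x else x - 1) (butlast p)"
    and "is_perm (n-1) (std (butlast p))"
    and "ins (std (butlast p)) (last p) = p"
    and "des (std (butlast p)) = des (butlast p)"
proof -
  define b where "b = last p"
  let ?g = "\<lambda>x. if x < b then x else x - 1"
  have pne: "p \<noteq> []" using assms unfolding is_perm_def by auto
  have dist: "distinct p" and setp: "set p = {1..n}" and len: "length p = n"
    using assms unfolding is_perm_def by auto
  have "b \<in> set p" using pne unfolding b_def by (rule last_in_set)
  hence bin: "1 \<le> b" "b \<le> n" using setp by auto
  have setb: "set (butlast p) = {1..n} - {b}"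
  proof -
    have "distinct (butlast p @ [b])" using dist pne unfolding b_def by simp
    hence "b \<notin> set (butlast p)" by simp
    moreover have "set p = insert b (set (butlast p))" using pne unfolding b_def by (metis append_butlast_last_id Un_insert_right list.set(1) list.set(2) set_append sup_bot.right_neutral)
    ultimately show ?thesis using setp by auto
  qed
  have db: "distinct (butlast p)" using dist by (simp add: distinct_butlast)
  have s1: "std (butlast p) = map ?g (butlast p)"
    unfolding std_def
  proof (rule map_cong[OF refl])
    fix x assume x: "x \<in> set (butlast p)"
    hence xr: "x \<in> {1..n} - {b}" using setb by simp
    show "card {y \<in> set (butlast p). y \<le> x} = ?g x"
    proof (cases "x < b")
      case True
      have "{y \<in> set (butlast p). y \<le> x} = {1..x}" unfolding setb using xr True by (intro cnt1) auto
      thus ?thesis using True by simp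
    next
      case False
      hence gt: "x > b" using xr by auto
      have "{y \<in> set (butlast p). y \<le> x} = {1..x} - {b}" unfolding setb using xr gt by (intro cnt2) auto
      thus ?thesis using gt bin cnt3[OF gt bin(1)] by simp
    qed
  qed
  thus "std (butlast p) = map (\<lambda>x. if x < last p then x else x - 1) (butlast p)" unfolding b_def .
  have inj: "inj_on ?g (set (butlast p))" unfolding setb by (rule injg)
  have img: "?g ` set (butlast p) = {1..n-1}" unfolding setb using bin by (rule imgg)
  show "is_perm (n-1) (std (butlast p))" unfolding s1 is_perm_def
    using len db inj img by (simp add: distinct_map)
  have "ins (map ?g (butlast p)) b = map (\<lambda>x. x) (butlast p) @ [b]"
    unfolding ins_def map_map o_def
  proof (rule arg_cong2[where f="(@)"])
    show "map (\<lambda>x. if b \<le> ?g x then ?g x + 1 else ?g x) (butlast p) = map (\<lambda>x. x) (butlast p)"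
      by (rule map_cong[OF refl]) (use insg setb in auto)
  qed simp
  thus "ins (std (butlast p)) (last p) = p" using s1 pne unfolding b_def by simp
  show "des (std (butlast p)) = des (butlast p)" unfolding s1
    by (rule des_map_mono) (unfold setb, rule monog)
qed

lemma tval_alt: "tval k p = (int k + 1) * (int (length p) - int (des p)) - int (last p)"
  unfolding tval_def by (simp add: algebra_simps)

lemma modK: fixes K d j :: int assumes "0 \<le> j" "j < K" shows "(K*d + j) mod K = j"
  using assms by (simp add: mod_pos_pos_trivial)

lemma main:
  "p \<in> A n k \<Longrightarrow> n \<ge> 1 \<Longrightarrow> is_perm n (phi k p) \<and>
     int (des (phi k p)) = tval k p div (int k + 1) \<and>
     int (last (phi k p)) = int n - int k + tval k p mod (int k + 1) \<and>
     phi k (phi k p) = p"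
proof (induction n arbitrary: p)
  case 0 thus ?case by simp
next
  case (Suc m)
  let ?K = "int k + 1"
  have pP: "is_perm (Suc m) p" and pmd: "maxdrop p \<le> int k" using Suc.prems unfolding A_def by auto
  have len: "length p = Suc m" and dist: "distinct p" and setp: "set p = {1..Suc m}"
    using pP unfolding is_perm_def by auto
  have pne: "p \<noteq> []" using len by auto
  have md: "\<forall>i<Suc m. int (Suc i) - int (p ! i) \<le> int k" using pmd maxdrop_le[OF pne] len by simp
  have inset: "\<And>i. i < Suc m \<Longrightarrow> p ! i \<in> {1..Suc m}" using len setp by (auto simp: set_conv_nth)
  show ?case
  proof (cases "m = 0")
    case True
    have l1: "length p = Suc 0" using len True by simp
    then obtain x where px: "p = [x]" by (auto simp: length_Suc_conv)
    have "{x} = {1::nat}" using setp px True by simp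
    hence "x = 1" by simp
    hence p1: "p = [1]" using px by simp
    have d: "des [1] = 0" unfolding des_def by simp
    have tv: "tval k [1] = int k" unfolding tval_def d by simp
    have "int k div (int k + 1) = 0" "int k mod (int k + 1) = int k" by simp_all
    thus ?thesis unfolding p1 tv using True d by (simp add: is_perm_def)
  next
    case False
    hence m1: "m \<ge> 1" by simp
    define b where "b = last p"
    define a where "a = p ! (m - 1)"
    define p' where "p' = std (butlast p)"
    have b_nth: "b = p ! m" unfolding b_def using len pne by (simp add: last_conv_nth)
    have bb: "1 \<le> b" "b \<le> Suc m" "int (Suc m) - int b \<le> int k"
      using inset[of m] md b_nth by auto
    have ab: "1 \<le> a" "a \<le> Suc m" "int m - int a \<le> int k"
      using inset[of "m-1"] md[rule_format, of "m-1"] m1 unfolding a_def by auto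
    have anb: "a \<noteq> b" unfolding a_def b_nth using dist len m1 by (simp add: nth_eq_iff_index_eq)
    note sb = std_butlast[OF pP, simplified]
    have p'map: "p' = map (\<lambda>x. if x < b then x else x - 1) (butlast p)"
      unfolding p'_def b_def using sb(1) by simp
    have p'P: "is_perm m p'" unfolding p'_def using sb(2) by simp
    have lenb: "length (butlast p) = m" using len by simp
    have nthb: "\<And>i. i < m \<Longrightarrow> butlast p ! i = p ! i" using len by (simp add: nth_butlast)
    have p'md: "maxdrop p' \<le> int k"
    proof -
      have "length p' = m" using p'map lenb by simp
      hence p'ne: "p' \<noteq> []" using m1 by auto
      have "\<forall>i<length p'. int (Suc i) - int (p' ! i) \<le> int k"
      proof (intro allI impI)
        fix i assume i: "i < length p'"
        hence im: "i < m" using p'map lenb by simp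
        have pi: "p' ! i = (if p ! i < b then p ! i else p ! i - 1)"
          using im p'map lenb nthb by simp
        have ne: "p ! i \<noteq> b" unfolding b_nth using dist len im by (simp add: nth_eq_iff_index_eq)
        show "int (Suc i) - int (p' ! i) \<le> int k"
        proof (cases "p ! i < b")
          case True thus ?thesis using pi md im by auto
        next
          case False
          hence "p ! i > b" using ne by simp
          thus ?thesis using pi im bb by auto
        qed
      qed
      thus ?thesis using maxdrop_le[OF p'ne] by simp
    qed
    have p'A: "p' \<in> A m k" unfolding A_def using p'P p'md by simp
    obtain s where s_def: "s = phi k p'" by simp
    have IH: "is_perm m s" "int (des s) = tval k p' div ?K"
      "int (last s) = int m - int k + tval k p' mod ?K" "phi k s = p'"
      using Suc.IH[OF p'A m1] s_def by auto
    have lenp': "length p' = m" using p'P unfolding is_perm_def by simp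
    have bne0: "butlast p \<noteq> []" using lenb m1 by (metis list.size(3) not_one_le_zero)
    have lastb: "last (butlast p) = a"
    proof -
      have "last (butlast p) = butlast p ! (m - 1)" using bne0 lenb by (simp add: last_conv_nth)
      also have "\<dots> = p ! (m - 1)" using nthb m1 by simp
      finally show ?thesis unfolding a_def .
    qed
    have bne: "butlast p \<noteq> []" by (rule bne0)
    have lastp': "last p' = (if a < b then a else a - 1)"
      unfolding p'map using bne lastb by (simp add: last_map)
    have desp: "des p = des (butlast p) + (if a > b then 1 else 0)"
      using des_snoc[OF bne, of b] pne unfolding b_def lastb by simp
    have desp': "des p' = des (butlast p)" unfolding p'_def using sb(4) by simp
    define T where "T = tval k p"
    define T' where "T' = tval k p'"
    have T: "T = ?K * (int (Suc m) - int (des p)) - int b" unfolding T_def tval_alt len b_def ..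
    have T': "T' = ?K * (int m - int (des p')) - int (last p')" unfolding T'_def tval_alt lenp' ..
    obtain e where e: "T = T' + e" "0 \<le> e" "e < ?K"
    proof (cases "a < b")
      case True
      have "T = T' + (?K - int b + int a)" unfolding T T' lastp' desp desp' using True
        by (simp add: algebra_simps)
      thus ?thesis using that True bb ab by auto
    next
      case False
      hence gt: "a > b" using anb by simp
      have "T = T' + (int a - 1 - int b)" unfolding T T' lastp' desp desp' using gt
        by (simp add: algebra_simps of_nat_diff)
      thus ?thesis using that gt bb ab by auto
    qed
    have Kpos: "?K > 0" by simp
    have Tmod: "T mod ?K = (- int b) mod ?K"
    proof -
      have "T = ?K * (int (Suc m) - int (des p)) + (- int b)" using T by simp
      thus ?thesis by (metis mod_mult_self4 mult.commute)
    qed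
    have r0: "int (Suc m) - int k + T mod ?K \<ge> 1"
    proof (cases "Suc m > k")
      case True thus ?thesis using pos_mod_sign[OF Kpos, of T] by linarith
    next
      case False
      hence "int b < ?K" using bb by simp
      hence "(- int b) mod ?K = ?K - int b"
        using modK[of "?K - int b" ?K "-1"] bb by simp
      thus ?thesis using Tmod bb by simp
    qed
    have r1: "int (Suc m) - int k + T mod ?K \<le> int (Suc m)"
      using pos_mod_bound[OF Kpos, of T] by linarith
    define r where "r = nat (int (Suc m) - int k + T mod ?K)"
    have rr: "int r = int (Suc m) - int k + T mod ?K" "1 \<le> r" "r \<le> Suc m"
      unfolding r_def using r0 r1 by auto
    have phip: "phi k p = ins s r"
      using phi_step[of p k] len m1 unfolding s_def r_def T_def p'_def by simp
    have sne: "s \<noteq> []" using IH(1) m1 unfolding is_perm_def by auto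
    have P1: "is_perm (Suc m) (ins s r)" using ins_perm[of "Suc m" s r] IH(1) rr by simp
    have L1: "last (ins s r) = r" unfolding ins_def by simp
    have D1: "int (des (ins s r)) = T div ?K"
    proof -
      have "(r \<le> last s) = (T' mod ?K > T mod ?K)" using IH(3) rr unfolding T'_def by linarith
      hence "int (des (ins s r)) = T' div ?K + (if T' mod ?K > T mod ?K then 1 else 0)"
        using des_ins[OF sne, of r] IH(2) unfolding T'_def by simp
      also have "\<dots> = T div ?K" using wrap[OF Kpos e(2) e(3), of T'] e(1) by simp
      finally show ?thesis .
    qed
    have lenins: "length (ins s r) = Suc m" using P1 unfolding is_perm_def by simp
    have T2: "tval k (ins s r) = ?K * int (des p) + (int b - int (Suc m) + int k)"
    proof -
      have "tval k (ins s r) = ?K * (int (Suc m) - T div ?K) - int r"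
        unfolding tval_alt lenins L1 D1 ..
      also have "\<dots> = ?K * int (Suc m) - (?K * (T div ?K) + T mod ?K) - int (Suc m) + int k"
        using rr(1) by (simp add: algebra_simps)
      also have "?K * (T div ?K) + T mod ?K = T" by simp
      finally show ?thesis unfolding T by (simp add: algebra_simps)
    qed
    have T2mod: "tval k (ins s r) mod ?K = int b - int (Suc m) + int k"
      unfolding T2 by (rule modK) (use bb in auto)
    have "phi k (ins s r) = ins (phi k s) (nat (int (Suc m) - int k + tval k (ins s r) mod ?K))"
      using phi_step[of "ins s r" k] lenins std_butlast_ins[OF IH(1)] m1 by simp
    also have "\<dots> = ins p' b" using IH(4) T2mod by simp
    also have "\<dots> = p" unfolding p'_def b_def using sb(3) by simp
    finally have INV: "phi k (ins s r) = p" .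
    show ?thesis unfolding phip T_def[symmetric] using P1 D1 L1 rr(1) INV by simp
  qed
qed

theorem lemma2p3:
  fixes n k :: nat and p :: "nat list"
  assumes "n \<ge> 1" and "p \<in> A n k"
  shows "phi k (phi k p) = p"
  using main[OF assms(2) assms(1)] by simp

end
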